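(* For each $X\subseteq\omega$, the equivalence relation $E^X_=$ on $\omega$ defined by $i\,E^X_=\,j\iff W_i^X=W_j^X$ is complete among all $\Pi^X_2$ equivalence relations on $\omega$ with respect to finitary reducibility; that is, for every equivalence relation $R$ on $\omega$ which is $\Pi^0_2$ relative to $X$, there is a (computable, not merely $X$-computable) finitary reduction from $R$ to $E^X_=$.
   Context: $W_e^X$ denotes the domain of the $e$-th oracle Turing machine with oracle $X$. For equivalence relations $E,F$ on $\omega$, a finitary reduction from $E$ to $F$ is a single total computable function which, given $n\ge1$ and an $n$-tuple $(x_0,\dots,x_{n-1})\in\omega^n$, outputs an $n$-tuple $(y_0,\dots,y_{n-1})\in\omega^n$ such that for all $i<j<n$, $x_i\,E\,x_j\iff y_i\,F\,y_j$; its existence is written $E\leq_c^{<\omega}F$. *)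

theory Defs
  imports Main "HOL-Library.Nat_Bijection"
begin

datatype recf =
    Zero
  | SucF
  | Proj nat
  | Comp recf "recf list"
  | Prec recf recf
  | Minim recf
  | Oracle

text \<open>Big-step semantics relative to the oracle set X (a partial function: the relation
  is functional, undefined = no result).\<close>

inductive eval :: "nat set \<Rightarrow> recf \<Rightarrow> nat list \<Rightarrow> nat \<Rightarrow> bool" for X :: "nat set" where
  eval_Zero: "eval X Zero xs 0"
| eval_Suc: "eval X SucF (x # xs) (Suc x)"
| eval_Proj: "i < length xs \<Longrightarrow> eval X (Proj i) xs (xs ! i)"
| eval_Comp: "list_all2 (\<lambda>g y. eval X g xs y) gs ys \<Longrightarrow> eval X f ys z
      \<Longrightarrow> eval X (Comp f gs) xs z"
| eval_Prec0: "eval X f xs y \<Longrightarrow> eval X (Prec f g) (0 # xs) y"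
| eval_PrecS: "eval X (Prec f g) (n # xs) y \<Longrightarrow> eval X g (n # y # xs) z
      \<Longrightarrow> eval X (Prec f g) (Suc n # xs) z"
| eval_Minim: "eval X f (n # xs) 0 \<Longrightarrow> (\<forall>m<n. \<exists>y. 0 < y \<and> eval X f (m # xs) y)
      \<Longrightarrow> eval X (Minim f) xs n"
| eval_Oracle: "eval X Oracle (x # xs) (if x \<in> X then 1 else 0)"

text \<open>Goedel numbering of programs (computable, injective, decidable range).\<close>

fun enc :: "recf \<Rightarrow> nat" where
  "enc Zero = prod_encode (0, 0)"
| "enc SucF = prod_encode (1, 0)"
| "enc (Proj i) = prod_encode (2, i)"
| "enc (Comp f gs) = prod_encode (3, list_encode (enc f # map enc gs))"
| "enc (Prec f g) = prod_encode (4, prod_encode (enc f, enc g))"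
| "enc (Minim f) = prod_encode (5, enc f)"
| "enc Oracle = prod_encode (6, 0)"

text \<open>W_e^X: domain of the e-th oracle machine with oracle X (non-codes: empty).\<close>

definition W :: "nat \<Rightarrow> nat set \<Rightarrow> nat set" where
  "W e X = {x. \<exists>p y. enc p = e \<and> eval X p [x] y}"

definition Pi2_rel :: "nat set \<Rightarrow> (nat \<Rightarrow> nat \<Rightarrow> bool) \<Rightarrow> bool" where
  "Pi2_rel X R \<longleftrightarrow> (\<exists>Q p. (\<forall>i j a b. eval X p [i, j, a, b] (if Q i j a b then 1 else 0))
      \<and> (\<forall>i j. R i j \<longleftrightarrow> (\<forall>a. \<exists>b. Q i j a b)))"

text \<open>Finitary reducibility: one total computable (oracle-free) function mapping each
  n-tuple (n \<ge> 1, coded as a nonempty list via list_encode) to an n-tuple.\<close>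

definition finitary_reducible :: "(nat \<Rightarrow> nat \<Rightarrow> bool) \<Rightarrow> (nat \<Rightarrow> nat \<Rightarrow> bool) \<Rightarrow> bool" where
  "finitary_reducible E F \<longleftrightarrow> (\<exists>g :: nat list \<Rightarrow> nat list. \<exists>p.
      (\<forall>xs. xs \<noteq> [] \<longrightarrow> eval {} p [list_encode xs] (list_encode (g xs))) \<and>
      (\<forall>xs. xs \<noteq> [] \<longrightarrow> length (g xs) = length xs \<and>
         (\<forall>i j. i < j \<and> j < length xs \<longrightarrow> (E (xs ! i) (xs ! j) \<longleftrightarrow> F (g xs ! i) (g xs ! j)))))"

end

theory Submission
  imports Defs
begin


lemma eval_det: "eval X p xs y \<Longrightarrow> eval X p xs y' \<Longrightarrow> y = y'"
proof (induction arbitrary: y' rule: eval.induct)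
  case (eval_Zero xs)
  from eval_Zero.prems show ?case by (cases rule: eval.cases) (use eval_Zero in auto)
next
  case (eval_Suc x xs)
  from eval_Suc.prems show ?case by (cases rule: eval.cases) (use eval_Suc in auto)
next
  case (eval_Proj i xs)
  from eval_Proj.prems show ?case by (cases rule: eval.cases) (use eval_Proj in auto)
next
  case (eval_Comp xs gs ys f z)
  from eval_Comp.prems obtain ys' where a: "list_all2 (\<lambda>g y. eval X g xs y) gs ys'" and b: "eval X f ys' y'"
    by (cases rule: eval.cases) auto
  have "ys = ys'" using eval_Comp.IH(1) a
    by (induction gs ys arbitrary: ys' rule: list_all2_induct) (auto simp: list_all2_Cons1)
  then show ?case using eval_Comp.IH(2) b by auto
next
  case (eval_Prec0 f xs y g)
  from eval_Prec0.prems show ?case by (cases rule: eval.cases) (use eval_Prec0 in auto)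
next
  case (eval_PrecS f g n xs y z)
  from eval_PrecS.prems obtain y2 where "eval X (Prec f g) (n # xs) y2" "eval X g (n # y2 # xs) y'"
    by (cases rule: eval.cases) auto
  then show ?case using eval_PrecS.IH by auto
next
  case (eval_Minim f n xs)
  from eval_Minim.prems have a: "eval X f (y' # xs) 0" and b: "\<forall>m<y'. \<exists>y>0. eval X f (m # xs) y"
    by (cases rule: eval.cases; auto)+
  show ?case
  proof (rule ccontr)
    assume "n \<noteq> y'"
    then consider "n < y'" | "y' < n" by linarith
    then show False
    proof cases
      case 1 then obtain y where "y > 0" "eval X f (n # xs) y" using b by blast
      then show False using eval_Minim.IH(1) by fastforce
    next
      case 2 then show False using eval_Minim.IH(2) a by fastforce
    qed
  qed
next
  case (eval_Oracle x xs)
  from eval_Oracle.prems show ?case by (cases rule: eval.cases) (use eval_Oracle in auto)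
qed

lemma map_enc_inj: "(\<And>g g'. g \<in> set gs \<Longrightarrow> enc g = enc g' \<Longrightarrow> g = g') \<Longrightarrow> map enc gs = map enc gs' \<Longrightarrow> gs = gs'"
  by (induction gs arbitrary: gs') (auto simp: Cons_eq_map_conv)

lemma enc_inj: "enc p = enc p' \<Longrightarrow> p = p'"
proof (induction p arbitrary: p')
  case (Comp f gs)
  then show ?case
    by (cases p') (auto simp: prod_encode_eq list_encode_eq intro: map_enc_inj)
qed (case_tac p'; auto simp: prod_encode_eq list_encode_eq)+



definition rcomp :: "nat set \<Rightarrow> nat \<Rightarrow> (nat list \<Rightarrow> nat) \<Rightarrow> bool" where
  "rcomp X k f \<longleftrightarrow> (\<exists>p. \<forall>xs. length xs = k \<longrightarrow> eval X p xs (f xs))"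

lemma rcomp_cong: "rcomp X k f \<Longrightarrow> (\<And>xs. length xs = k \<Longrightarrow> f xs = g xs) \<Longrightarrow> rcomp X k g"
  unfolding rcomp_def by metis

primrec K :: "nat \<Rightarrow> recf" where
  "K 0 = Zero"
| "K (Suc c) = Comp SucF [K c]"

lemma eval_K: "eval X (K c) xs c"
  by (induction c) (auto intro!: eval.intros)

lemma rcomp_const: "rcomp X k (\<lambda>_. c)"
  unfolding rcomp_def using eval_K by blast

lemma rcomp_proj: "i < k \<Longrightarrow> rcomp X k (\<lambda>xs. xs ! i)"
  unfolding rcomp_def by (auto intro!: exI[of _ "Proj i"] eval.intros)

lemma progs_exist:
  assumes "\<forall>G\<in>set Gs. rcomp X k G"
  shows "\<exists>ps. length ps = length Gs \<and> (\<forall>i<length Gs. \<forall>xs. length xs = k \<longrightarrow> eval X (ps!i) xs ((Gs!i) xs))"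
  using assms
proof (induction Gs)
  case Nil then show ?case by simp
next
  case (Cons G Gs)
  then obtain ps where ps: "length ps = length Gs" "\<forall>i<length Gs. \<forall>xs. length xs = k \<longrightarrow> eval X (ps!i) xs ((Gs!i) xs)" by auto
  from Cons.prems obtain p where p: "\<forall>xs. length xs = k \<longrightarrow> eval X p xs (G xs)" unfolding rcomp_def by auto
  have "\<forall>i<length (G # Gs). \<forall>xs. length xs = k \<longrightarrow> eval X ((p # ps)!i) xs (((G # Gs)!i) xs)"
  proof (intro allI impI)
    fix i and xs :: "nat list" assume "i < length (G # Gs)" "length xs = k"
    then show "eval X ((p # ps)!i) xs (((G # Gs)!i) xs)"
      using ps p by (cases i) auto
  qed
  then show ?case using ps by (intro exI[of _ "p # ps"]) simp
qed

lemma rcomp_compose: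
  assumes "rcomp X (length Gs) F" "\<forall>G\<in>set Gs. rcomp X k G"
  shows "rcomp X k (\<lambda>xs. F (map (\<lambda>G. G xs) Gs))"
proof -
  obtain pf where pf: "\<forall>xs. length xs = length Gs \<longrightarrow> eval X pf xs (F xs)" using assms(1) unfolding rcomp_def by auto
  obtain ps where ps: "length ps = length Gs" "\<forall>i<length Gs. \<forall>xs. length xs = k \<longrightarrow> eval X (ps!i) xs ((Gs!i) xs)"
    using progs_exist[OF assms(2)] by auto
  show ?thesis unfolding rcomp_def
  proof (intro exI[of _ "Comp pf ps"] allI impI)
    fix xs :: "nat list" assume "length xs = k"
    then have "list_all2 (\<lambda>g y. eval X g xs y) ps (map (\<lambda>G. G xs) Gs)"
      using ps by (auto simp: list_all2_conv_all_nth)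
    then show "eval X (Comp pf ps) xs (F (map (\<lambda>G. G xs) Gs))"
      using pf \<open>length xs = k\<close> by (intro eval_Comp) auto
  qed
qed

lemma rcomp_app1: "rcomp X 1 F \<Longrightarrow> rcomp X k f \<Longrightarrow> rcomp X k (\<lambda>xs. F [f xs])"
  using rcomp_compose[of X "[f]" F k] by simp
lemma rcomp_app2: "rcomp X 2 F \<Longrightarrow> rcomp X k f \<Longrightarrow> rcomp X k g \<Longrightarrow> rcomp X k (\<lambda>xs. F [f xs, g xs])"
  using rcomp_compose[of X "[f, g]" F k] by (simp add: numeral_2_eq_2)
lemma rcomp_app3: "rcomp X 3 F \<Longrightarrow> rcomp X k f \<Longrightarrow> rcomp X k g \<Longrightarrow> rcomp X k h \<Longrightarrow> rcomp X k (\<lambda>xs. F [f xs, g xs, h xs])"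
  using rcomp_compose[of X "[f, g, h]" F k] by (simp add: numeral_3_eq_3)
lemma rcomp_app4: "rcomp X 4 F \<Longrightarrow> rcomp X k f \<Longrightarrow> rcomp X k g \<Longrightarrow> rcomp X k h \<Longrightarrow> rcomp X k u \<Longrightarrow> rcomp X k (\<lambda>xs. F [f xs, g xs, h xs, u xs])"
  using rcomp_compose[of X "[f, g, h, u]" F k] by (simp add: eval_nat_numeral)

lemma rcomp_cons: "rcomp X (Suc k) F \<Longrightarrow> rcomp X k f \<Longrightarrow> rcomp X k (\<lambda>xs. F (f xs # xs))"
proof -
  assume a: "rcomp X (Suc k) F" "rcomp X k f"
  have h: "rcomp X k (\<lambda>xs. F (map (\<lambda>G. G xs) (f # map (\<lambda>i xs. xs ! i) [0..<k])))"
    using a by (intro rcomp_compose) (auto intro: rcomp_proj)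
  have eq: "map (\<lambda>G. G xs) (map (\<lambda>i xs. xs ! i) [0..<length xs]) = xs" for xs :: "nat list"
    by (simp add: map_nth comp_def)
  show ?thesis by (rule rcomp_cong[OF h]) (use eq in auto)
qed

lemma rcomp_shift: "rcomp X k f \<Longrightarrow> rcomp X (Suc k) (\<lambda>xs. f (tl xs))"
proof -
  assume a: "rcomp X k f"
  have h: "rcomp X (Suc k) (\<lambda>xs. f (map (\<lambda>G. G xs) (map (\<lambda>i xs. xs ! Suc i) [0..<k])))"
    using a by (intro rcomp_compose) (auto intro: rcomp_proj)
  have eq: "length xs = Suc k \<Longrightarrow> map (\<lambda>G. G xs) (map (\<lambda>i xs. xs ! Suc i) [0..<k]) = tl xs" for xs :: "nat list"
    by (rule nth_equalityI) (auto simp: nth_tl)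
  show ?thesis by (rule rcomp_cong[OF h]) (use eq in auto)
qed

fun PR :: "(nat list \<Rightarrow> nat) \<Rightarrow> (nat list \<Rightarrow> nat) \<Rightarrow> nat \<Rightarrow> nat list \<Rightarrow> nat" where
  "PR f g 0 xs = f xs"
| "PR f g (Suc n) xs = g (n # PR f g n xs # xs)"

lemma rcomp_prec: "rcomp X k f \<Longrightarrow> rcomp X (Suc (Suc k)) g \<Longrightarrow> rcomp X (Suc k) (\<lambda>xs. PR f g (hd xs) (tl xs))"
proof -
  assume "rcomp X k f" "rcomp X (Suc (Suc k)) g"
  then obtain pf pg where pf: "\<forall>xs. length xs = k \<longrightarrow> eval X pf xs (f xs)"
    and pg: "\<forall>xs. length xs = Suc (Suc k) \<longrightarrow> eval X pg xs (g xs)" unfolding rcomp_def by auto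
  have *: "length xs = k \<Longrightarrow> eval X (Prec pf pg) (n # xs) (PR f g n xs)" for n xs
  proof (induction n)
    case 0 then show ?case using pf by (auto intro: eval_Prec0)
  next
    case (Suc n) then show ?case using pg by (auto intro: eval_PrecS)
  qed
  show ?thesis unfolding rcomp_def
    by (rule exI[of _ "Prec pf pg"]) (auto simp: length_Suc_conv intro: *)
qed

lemma rcomp_minim:
  assumes "rcomp X (Suc k) f" "\<And>xs. length xs = k \<Longrightarrow> \<exists>m. f (m # xs) = 0"
  shows "rcomp X k (\<lambda>xs. LEAST m. f (m # xs) = 0)"
proof -
  obtain p where p: "\<forall>xs. length xs = Suc k \<longrightarrow> eval X p xs (f xs)" using assms(1) unfolding rcomp_def by auto
  show ?thesis unfolding rcomp_def
  proof (intro exI[of _ "Minim p"] allI impI)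
    fix xs :: "nat list" assume l: "length xs = k"
    show "eval X (Minim p) xs (LEAST m. f (m # xs) = 0)"
    proof (rule eval_Minim)
      have "f ((LEAST m. f (m # xs) = 0) # xs) = 0" by (rule LeastI_ex[OF assms(2)[OF l]])
      then show "eval X p ((LEAST m. f (m # xs) = 0) # xs) 0"
        using p[rule_format, of "(LEAST m. f (m # xs) = 0) # xs"] l by simp
      show "\<forall>m<(LEAST m. f (m # xs) = 0). \<exists>y>0. eval X p (m # xs) y"
      proof (intro allI impI)
        fix m assume "m < (LEAST m. f (m # xs) = 0)"
        then have "f (m # xs) \<noteq> 0" by (rule not_less_Least)
        then show "\<exists>y>0. eval X p (m # xs) y" using p[rule_format, of "m # xs"] l by auto
      qed
    qed
  qed
qed

lemma minim_halts:
  assumes "\<forall>ys. length ys = Suc k \<longrightarrow> eval X p ys (f ys)" "length xs = k"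
  shows "(\<exists>y. eval X (Minim p) xs y) \<longleftrightarrow> (\<exists>m. f (m # xs) = 0)"
proof
  assume "\<exists>y. eval X (Minim p) xs y"
  then obtain y where "eval X (Minim p) xs y" by auto
  then have "eval X p (y # xs) 0" by (cases rule: eval.cases) auto
  moreover have "eval X p (y # xs) (f (y # xs))" using assms by auto
  ultimately have "f (y # xs) = 0" using eval_det by blast
  then show "\<exists>m. f (m # xs) = 0" by blast
next
  assume e: "\<exists>m. f (m # xs) = 0"
  show "\<exists>y. eval X (Minim p) xs y"
  proof (intro exI eval_Minim)
    have "f ((LEAST m. f (m # xs) = 0) # xs) = 0" by (rule LeastI_ex[OF e])
    then show "eval X p ((LEAST m. f (m # xs) = 0) # xs) 0"
      using assms(1)[rule_format, of "(LEAST m. f (m # xs) = 0) # xs"] assms(2) by simp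
    show "\<forall>m<(LEAST m. f (m # xs) = 0). \<exists>y>0. eval X p (m # xs) y"
    proof (intro allI impI)
      fix m assume "m < (LEAST m. f (m # xs) = 0)"
      then have "f (m # xs) \<noteq> 0" by (rule not_less_Least)
      then show "\<exists>y>0. eval X p (m # xs) y" using assms(1)[rule_format, of "m # xs"] assms(2) by auto
    qed
  qed
qed



lemma rcomp_cong2: "rcomp X k f \<Longrightarrow> k = k' \<Longrightarrow> (\<And>xs. length xs = k \<Longrightarrow> f xs = g xs) \<Longrightarrow> rcomp X k' g"
  using rcomp_cong by blast

lemma rcomp_reindex:
  assumes "rcomp X m h" "\<forall>i<m. idx i < k"
  shows "rcomp X k (\<lambda>ys. h (map (\<lambda>i. ys ! idx i) [0..<m]))"
proof -
  have "rcomp X k (\<lambda>ys. h (map (\<lambda>G. G ys) (map (\<lambda>i ys. ys ! idx i) [0..<m])))"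
    using assms by (intro rcomp_compose) (auto intro: rcomp_proj)
  then show ?thesis by (simp add: comp_def)
qed

lemma rcomp_drop2: "rcomp X (Suc k) h \<Longrightarrow> rcomp X (Suc (Suc k)) (\<lambda>ys. h (hd ys # tl (tl ys)))"
proof -
  assume a: "rcomp X (Suc k) h"
  have r: "rcomp X (Suc (Suc k)) (\<lambda>ys. h (map (\<lambda>i. ys ! (if i = 0 then 0 else Suc i)) [0..<Suc k]))"
    by (rule rcomp_reindex[OF a]) auto
  have eq: "length ys = Suc (Suc k) \<Longrightarrow> map (\<lambda>i. ys ! (if i = 0 then 0 else Suc i)) [0..<Suc k] = hd ys # tl (tl ys)" for ys :: "nat list"
  proof -
    assume l: "length ys = Suc (Suc k)"
    then obtain a b r where ys: "ys = a # b # r" "length r = k" by (auto simp: length_Suc_conv)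
    show ?thesis unfolding ys by (rule nth_equalityI) (use ys in \<open>auto simp del: upt_Suc simp: nth_Cons'\<close>)
  qed
  show ?thesis by (rule rcomp_cong[OF r]) (use eq in auto)
qed

lemma rc_suc1: "rcomp X 1 (\<lambda>xs. Suc (xs ! 0))"
  unfolding rcomp_def by (rule exI[of _ SucF]) (auto simp: length_Suc_conv intro: eval.intros)

lemma rc_suc: "rcomp X k f \<Longrightarrow> rcomp X k (\<lambda>xs. Suc (f xs))"
  using rcomp_app1[OF rc_suc1] by simp

lemma PR_add: "PR (\<lambda>ys. ys!0) (\<lambda>ys. Suc (ys!1)) n [b] = n + b"
  by (induction n) auto

lemma rc_add2: "rcomp X 2 (\<lambda>xs. xs!0 + xs!1)"
proof -
  have "rcomp X (Suc 1) (\<lambda>xs. PR (\<lambda>ys. ys!0) (\<lambda>ys. Suc (ys!1)) (hd xs) (tl xs))"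
    by (intro rcomp_prec rc_suc rcomp_proj) auto
  then show ?thesis by (rule rcomp_cong2) (auto simp: length_Suc_conv PR_add[simplified])
qed

lemma rc_add: "rcomp X k f \<Longrightarrow> rcomp X k g \<Longrightarrow> rcomp X k (\<lambda>xs. f xs + g xs)"
  using rcomp_app2[OF rc_add2] by simp

lemma PR_pred: "PR (\<lambda>ys. 0) (\<lambda>ys. ys!0) n [] = n - 1"
  by (induction n) auto

lemma rc_pred1: "rcomp X 1 (\<lambda>xs. xs!0 - 1)"
proof -
  have "rcomp X (Suc 0) (\<lambda>xs. PR (\<lambda>ys. 0) (\<lambda>ys. ys!0) (hd xs) (tl xs))"
    by (intro rcomp_prec rcomp_const rcomp_proj) auto
  then show ?thesis by (rule rcomp_cong2) (auto simp: length_Suc_conv PR_pred)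
qed

lemma PR_sub: "PR (\<lambda>ys. ys!0) (\<lambda>ys. ys!1 - 1) n [b] = b - n"
  by (induction n) auto

lemma rc_sub2: "rcomp X 2 (\<lambda>xs. xs!1 - xs!0)"
proof -
  have "rcomp X 3 (\<lambda>ys. ys!1 - 1)"
    using rcomp_app1[OF rc_pred1 rcomp_proj[of 1 3]] by simp
  then have "rcomp X (Suc 1) (\<lambda>xs. PR (\<lambda>ys. ys!0) (\<lambda>ys. ys!1 - 1) (hd xs) (tl xs))"
    by (intro rcomp_prec rcomp_proj) (auto simp: numeral_3_eq_3)
  then show ?thesis by (rule rcomp_cong2) (auto simp: length_Suc_conv PR_sub[simplified])
qed

lemma rc_sub: "rcomp X k f \<Longrightarrow> rcomp X k g \<Longrightarrow> rcomp X k (\<lambda>xs. f xs - g xs)"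
proof -
  assume a: "rcomp X k f" "rcomp X k g"
  show ?thesis using rcomp_app2[OF rc_sub2 a(2) a(1)] by simp
qed

lemma PR_mult: "PR (\<lambda>ys. 0) (\<lambda>ys. ys!1 + ys!2) n [b] = n * b"
  by (induction n) auto

lemma rc_mult2: "rcomp X 2 (\<lambda>xs. xs!0 * xs!1)"
proof -
  have "rcomp X (Suc (Suc 1)) (\<lambda>ys. ys!1 + ys!2)"
    by (intro rc_add rcomp_proj) auto
  then have "rcomp X (Suc 1) (\<lambda>xs. PR (\<lambda>ys. 0) (\<lambda>ys. ys!1 + ys!2) (hd xs) (tl xs))"
    by (intro rcomp_prec rcomp_const)
  then show ?thesis by (rule rcomp_cong2) (auto simp: length_Suc_conv PR_mult[simplified])
qed

lemma rc_mult: "rcomp X k f \<Longrightarrow> rcomp X k g \<Longrightarrow> rcomp X k (\<lambda>xs. f xs * g xs)"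
  using rcomp_app2[OF rc_mult2] by simp

definition b2n :: "bool \<Rightarrow> nat" where "b2n P = (if P then 1 else 0)"

lemma rc_pos: "rcomp X k f \<Longrightarrow> rcomp X k (\<lambda>xs. b2n (0 < f xs))"
proof -
  assume "rcomp X k f"
  then have "rcomp X k (\<lambda>xs. 1 - (1 - f xs))" by (intro rc_sub rcomp_const)
  then show ?thesis by (rule rcomp_cong) (auto simp: b2n_def)
qed

lemma rc_less: "rcomp X k f \<Longrightarrow> rcomp X k g \<Longrightarrow> rcomp X k (\<lambda>xs. b2n (f xs < g xs))"
proof -
  assume "rcomp X k f" "rcomp X k g"
  then have "rcomp X k (\<lambda>xs. b2n (0 < g xs - f xs))" by (intro rc_pos rc_sub)
  then show ?thesis by (rule rcomp_cong) auto
qed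

lemma rc_not: "rcomp X k (\<lambda>xs. b2n (P xs)) \<Longrightarrow> rcomp X k (\<lambda>xs. b2n (\<not> P xs))"
proof -
  assume "rcomp X k (\<lambda>xs. b2n (P xs))"
  then have "rcomp X k (\<lambda>xs. 1 - b2n (P xs))" by (intro rc_sub rcomp_const)
  then show ?thesis by (rule rcomp_cong) (auto simp: b2n_def)
qed

lemma rc_conj: "rcomp X k (\<lambda>xs. b2n (P xs)) \<Longrightarrow> rcomp X k (\<lambda>xs. b2n (Q xs)) \<Longrightarrow> rcomp X k (\<lambda>xs. b2n (P xs \<and> Q xs))"
proof -
  assume "rcomp X k (\<lambda>xs. b2n (P xs))" "rcomp X k (\<lambda>xs. b2n (Q xs))"
  then have "rcomp X k (\<lambda>xs. b2n (P xs) * b2n (Q xs))" by (intro rc_mult)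
  then show ?thesis by (rule rcomp_cong) (auto simp: b2n_def)
qed

lemma rc_disj: "rcomp X k (\<lambda>xs. b2n (P xs)) \<Longrightarrow> rcomp X k (\<lambda>xs. b2n (Q xs)) \<Longrightarrow> rcomp X k (\<lambda>xs. b2n (P xs \<or> Q xs))"
proof -
  assume "rcomp X k (\<lambda>xs. b2n (P xs))" "rcomp X k (\<lambda>xs. b2n (Q xs))"
  then have "rcomp X k (\<lambda>xs. b2n (\<not> (\<not> P xs \<and> \<not> Q xs)))" by (intro rc_not rc_conj)
  then show ?thesis by simp
qed

lemma rc_eq: "rcomp X k f \<Longrightarrow> rcomp X k g \<Longrightarrow> rcomp X k (\<lambda>xs. b2n (f xs = g xs))"
proof -
  assume "rcomp X k f" "rcomp X k g"
  then have "rcomp X k (\<lambda>xs. b2n (\<not> (f xs < g xs \<or> g xs < f xs)))" by (intro rc_not rc_disj rc_less)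
  moreover have "\<And>a b :: nat. (\<not> (a < b \<or> b < a)) = (a = b)" by auto
  ultimately show ?thesis by simp
qed

lemma rc_if: "rcomp X k (\<lambda>xs. b2n (P xs)) \<Longrightarrow> rcomp X k f \<Longrightarrow> rcomp X k g \<Longrightarrow> rcomp X k (\<lambda>xs. if P xs then f xs else g xs)"
proof -
  assume "rcomp X k (\<lambda>xs. b2n (P xs))" "rcomp X k f" "rcomp X k g"
  then have "rcomp X k (\<lambda>xs. b2n (P xs) * f xs + (1 - b2n (P xs)) * g xs)" by (intro rc_add rc_mult rc_sub rcomp_const)
  then show ?thesis by (rule rcomp_cong) (auto simp: b2n_def)
qed

lemma PR_ball: "PR (\<lambda>ys. 1) (\<lambda>ys. ys!1 * b2n (P (hd ys) (tl (tl ys)))) n xs = b2n (\<forall>j<n. P j xs)"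
  by (induction n) (auto simp: b2n_def less_Suc_eq)

lemma rc_ball:
  assumes "rcomp X (Suc k) (\<lambda>ys. b2n (P (hd ys) (tl ys)))" "rcomp X k N"
  shows "rcomp X k (\<lambda>xs. b2n (\<forall>j<N xs. P j xs))"
proof -
  have "rcomp X (Suc (Suc k)) (\<lambda>ys. ys!1 * b2n (P (hd ys) (tl (tl ys))))"
    using rcomp_drop2[OF assms(1)] by (intro rc_mult rcomp_proj) auto
  then have r: "rcomp X (Suc k) (\<lambda>xs. PR (\<lambda>ys. 1) (\<lambda>ys. ys!1 * b2n (P (hd ys) (tl (tl ys)))) (hd xs) (tl xs))"
    by (intro rcomp_prec rcomp_const)
  have "rcomp X k (\<lambda>xs. PR (\<lambda>ys. 1) (\<lambda>ys. ys!1 * b2n (P (hd ys) (tl (tl ys)))) (hd (N xs # xs)) (tl (N xs # xs)))"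
    by (rule rcomp_cons[OF r assms(2)])
  then show ?thesis by (simp add: PR_ball[simplified])
qed

lemma rc_bex:
  assumes "rcomp X (Suc k) (\<lambda>ys. b2n (P (hd ys) (tl ys)))" "rcomp X k N"
  shows "rcomp X k (\<lambda>xs. b2n (\<exists>j<N xs. P j xs))"
proof -
  have "rcomp X k (\<lambda>xs. b2n (\<not> (\<forall>j<N xs. \<not> P j xs)))"
    by (intro rc_not rc_ball assms)
  then show ?thesis by simp
qed



lemma PR_tri: "PR (\<lambda>ys. 0) (\<lambda>ys. ys!1 + Suc (ys!0)) n [] = triangle n"
  by (induction n) auto

lemma rc_tri1: "rcomp X 1 (\<lambda>xs. triangle (xs!0))"
proof -
  have "rcomp X (Suc (Suc 0)) (\<lambda>ys. ys!1 + Suc (ys!0))" by (intro rc_add rc_suc rcomp_proj) auto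
  then have "rcomp X (Suc 0) (\<lambda>xs. PR (\<lambda>ys. 0) (\<lambda>ys. ys!1 + Suc (ys!0)) (hd xs) (tl xs))"
    by (intro rcomp_prec rcomp_const)
  then show ?thesis by (rule rcomp_cong2) (auto simp: length_Suc_conv PR_tri[simplified])
qed

lemma rc_tri: "rcomp X k f \<Longrightarrow> rcomp X k (\<lambda>xs. triangle (f xs))"
  using rcomp_app1[OF rc_tri1] by simp

lemma rc_pe: "rcomp X k f \<Longrightarrow> rcomp X k g \<Longrightarrow> rcomp X k (\<lambda>xs. prod_encode (f xs, g xs))"
proof -
  assume "rcomp X k f" "rcomp X k g"
  then have "rcomp X k (\<lambda>xs. triangle (f xs + g xs) + f xs)" by (intro rc_add rc_tri)
  then show ?thesis by (simp add: prod_encode_def)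
qed

definition dec_s :: "nat \<Rightarrow> nat" where "dec_s z = (LEAST s. Suc z - triangle (Suc s) = 0)"

lemma triangle_ge: "n \<le> triangle n"
  by (induction n) auto

lemma dec_s_ex: "\<exists>s. Suc z - triangle (Suc s) = 0"
  using triangle_ge[of "Suc z"] by (intro exI[of _ z]) simp

lemma dec_s_facts: "triangle (dec_s z) \<le> z \<and> z < triangle (Suc (dec_s z))"
proof
  show "z < triangle (Suc (dec_s z))"
    using LeastI_ex[OF dec_s_ex[of z]] unfolding dec_s_def by simp
  show "triangle (dec_s z) \<le> z"
  proof (cases "dec_s z")
    case 0 then show ?thesis by simp
  next
    case (Suc s)
    then have "s < dec_s z" by simp
    then have "Suc z - triangle (Suc s) \<noteq> 0" unfolding dec_s_def by (rule not_less_Least)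
    then show ?thesis using Suc by simp
  qed
qed

lemma prod_decode_alt: "prod_decode z = (z - triangle (dec_s z), dec_s z - (z - triangle (dec_s z)))"
proof -
  let ?s = "dec_s z"
  have f: "triangle ?s \<le> z" "z < triangle ?s + Suc ?s" using dec_s_facts[of z] by auto
  have "prod_encode (z - triangle ?s, ?s - (z - triangle ?s)) = z"
    using f by (simp add: prod_encode_def)
  then show ?thesis by (metis prod_encode_inverse)
qed

lemma rc_dec_s1: "rcomp X 1 (\<lambda>xs. dec_s (xs!0))"
proof -
  have "rcomp X (Suc 1) (\<lambda>ys. Suc (ys!1) - triangle (Suc (ys!0)))"
    by (intro rc_sub rc_suc rc_tri rcomp_proj) auto
  then have "rcomp X 1 (\<lambda>xs. LEAST m. (\<lambda>ys. Suc (ys!1) - triangle (Suc (ys!0))) (m # xs) = 0)"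
  proof (rule rcomp_minim)
    fix xs :: "nat list" assume "length xs = 1"
    then obtain z where "xs = [z]" by (auto simp: length_Suc_conv)
    then show "\<exists>m. (\<lambda>ys. Suc (ys!1) - triangle (Suc (ys!0))) (m # xs) = 0" using dec_s_ex[of z] by simp
  qed
  then show ?thesis by (rule rcomp_cong) (auto simp: length_Suc_conv dec_s_def)
qed

lemma rc_fst: "rcomp X k f \<Longrightarrow> rcomp X k (\<lambda>xs. fst (prod_decode (f xs)))"
proof -
  assume a: "rcomp X k f"
  then have "rcomp X k (\<lambda>xs. f xs - triangle (dec_s (f xs)))"
    using rcomp_app1[OF rc_dec_s1 a] by (intro rc_sub rc_tri) auto
  then show ?thesis by (simp add: prod_decode_alt)
qed

lemma rc_snd: "rcomp X k f \<Longrightarrow> rcomp X k (\<lambda>xs. snd (prod_decode (f xs)))"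
proof -
  assume a: "rcomp X k f"
  have d: "rcomp X k (\<lambda>xs. dec_s (f xs))" using rcomp_app1[OF rc_dec_s1 a] by simp
  then have "rcomp X k (\<lambda>xs. dec_s (f xs) - (f xs - triangle (dec_s (f xs))))"
    using a by (intro rc_sub rc_tri)
  then show ?thesis by (simp add: prod_decode_alt)
qed

definition tlc :: "nat \<Rightarrow> nat" where "tlc z = snd (prod_decode (z - 1))"

lemma prod_decode_0: "prod_decode 0 = (0, 0)"
  by (simp add: prod_decode_def prod_decode_aux.simps)

lemma list_decode_tlc: "list_decode (tlc z) = tl (list_decode z)"
proof (cases z)
  case 0 then show ?thesis by (simp add: tlc_def prod_decode_0)
next
  case (Suc n) then show ?thesis by (simp add: tlc_def split: prod.split)
qed

definition Tz :: "nat \<Rightarrow> nat \<Rightarrow> nat" where "Tz j z = (tlc ^^ j) z"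

lemma list_decode_Tz: "list_decode (Tz j z) = drop j (list_decode z)"
  by (induction j) (auto simp: Tz_def list_decode_tlc drop_Suc tl_drop)

lemma list_decode_eq_Nil: "list_decode y = [] \<longleftrightarrow> y = 0"
  by (cases y) (auto split: prod.split)

lemma Tz_0_iff: "Tz j z = 0 \<longleftrightarrow> length (list_decode z) \<le> j"
  using list_decode_Tz[of j z] list_decode_eq_Nil[of "Tz j z"] by auto

lemma PR_Tz: "PR (\<lambda>ys. ys!0) (\<lambda>ys. tlc (ys!1)) j [z] = Tz j z"
  by (induction j) (auto simp: Tz_def)

lemma rc_Tz2: "rcomp X 2 (\<lambda>xs. Tz (xs!0) (xs!1))"
proof -
  have "rcomp X (Suc (Suc 1)) (\<lambda>ys. tlc (ys!1))"
    unfolding tlc_def by (intro rc_snd rc_sub rcomp_proj rcomp_const) auto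
  then have "rcomp X (Suc 1) (\<lambda>xs. PR (\<lambda>ys. ys!0) (\<lambda>ys. tlc (ys!1)) (hd xs) (tl xs))"
    by (intro rcomp_prec rcomp_proj) auto
  then show ?thesis by (rule rcomp_cong2) (auto simp: length_Suc_conv PR_Tz[simplified])
qed

lemma rc_Tz: "rcomp X k f \<Longrightarrow> rcomp X k g \<Longrightarrow> rcomp X k (\<lambda>xs. Tz (f xs) (g xs))"
  using rcomp_app2[OF rc_Tz2] by simp

lemma rc_len: "rcomp X k f \<Longrightarrow> rcomp X k (\<lambda>xs. length (list_decode (f xs)))"
proof -
  assume a: "rcomp X k f"
  have "rcomp X (Suc k) (\<lambda>ys. Tz (ys!0) (f (tl ys)))"
    by (intro rc_Tz rcomp_proj rcomp_shift a) auto
  then have "rcomp X k (\<lambda>xs. LEAST m. (\<lambda>ys. Tz (ys!0) (f (tl ys))) (m # xs) = 0)"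
    by (rule rcomp_minim) (auto simp: Tz_0_iff)
  moreover have "(LEAST m. Tz m z = 0) = length (list_decode z)" for z
    by (rule Least_equality) (auto simp: Tz_0_iff)
  ultimately show ?thesis by simp
qed

definition nthd :: "nat \<Rightarrow> nat \<Rightarrow> nat" where
  "nthd z j = (if j < length (list_decode z) then list_decode z ! j else 0)"

lemma nthd_alt: "nthd z j = fst (prod_decode (Tz j z - 1))"
proof (cases "j < length (list_decode z)")
  case True
  then have "list_decode (Tz j z) \<noteq> []" using list_decode_Tz[of j z] by auto
  then obtain n where n: "Tz j z = Suc n" by (cases "Tz j z") (auto)
  have "list_decode (Tz j z) = fst (prod_decode n) # list_decode (snd (prod_decode n))"
    unfolding n by (simp split: prod.split)
  then have "fst (prod_decode n) = hd (drop j (list_decode z))" using list_decode_Tz[of j z] by simp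
  also have "\<dots> = list_decode z ! j" using True by (simp add: hd_drop_conv_nth)
  finally show ?thesis using True n by (simp add: nthd_def)
next
  case False
  then have "Tz j z = 0" by (simp add: Tz_0_iff)
  then show ?thesis using False by (simp add: nthd_def prod_decode_0)
qed

lemma rc_nthd: "rcomp X k f \<Longrightarrow> rcomp X k g \<Longrightarrow> rcomp X k (\<lambda>xs. nthd (f xs) (g xs))"
proof -
  assume "rcomp X k f" "rcomp X k g"
  then have "rcomp X k (\<lambda>xs. fst (prod_decode (Tz (g xs) (f xs) - 1)))"
    by (intro rc_fst rc_sub rc_Tz rcomp_const)
  then show ?thesis by (simp add: nthd_alt)
qed



definition pathcond :: "(nat \<Rightarrow> nat \<Rightarrow> nat \<Rightarrow> nat \<Rightarrow> bool) \<Rightarrow> nat list \<Rightarrow> nat \<Rightarrow> nat \<Rightarrow> nat \<Rightarrow> bool" where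
  "pathcond Q xs i m t \<longleftrightarrow> (\<exists>p. p \<noteq> [] \<and> p!0 = m \<and> p!(length p - 1) = i \<and> (\<forall>j<length p. p!j < length xs) \<and>
      (\<forall>j<length p - 1. \<forall>a\<le>t. \<exists>b. Q (xs!(p!j)) (xs!(p!Suc j)) a b))"

lemma path_append:
  assumes "pathcond Q xs i m t" "j < length xs" "\<forall>a\<le>t. \<exists>b. Q (xs!i) (xs!j) a b"
  shows "pathcond Q xs j m t"
proof -
  obtain p where p: "p \<noteq> []" "p!0 = m" "p!(length p - 1) = i" "\<forall>j<length p. p!j < length xs"
      "\<forall>j<length p - 1. \<forall>a\<le>t. \<exists>b. Q (xs!(p!j)) (xs!(p!Suc j)) a b"
    using assms(1) unfolding pathcond_def by blast
  let ?p = "p @ [j]"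
  have "\<forall>k<length ?p - 1. \<forall>a\<le>t. \<exists>b. Q (xs!(?p!k)) (xs!(?p!Suc k)) a b"
  proof (intro allI impI)
    fix k a assume k: "k < length ?p - 1" and a: "a \<le> t"
    show "\<exists>b. Q (xs!(?p!k)) (xs!(?p!Suc k)) a b"
    proof (cases "Suc k < length p")
      case True then show ?thesis using p(5) a by (auto simp: nth_append)
    next
      case False
      then have "k = length p - 1" "Suc k = length p" using k p(1) by auto
      then show ?thesis using p(3) assms(3) a by (auto simp: nth_append)
    qed
  qed
  moreover have "\<forall>k<length ?p. ?p!k < length xs" using p(4) assms(2) by (auto simp: nth_append)
  ultimately show ?thesis unfolding pathcond_def using p(1,2)
    by (intro exI[of _ ?p]) (auto simp: nth_append)
qed

lemma path_R:
  assumes eq: "equivp R" and t: "\<forall>k<length xs. \<forall>k'<length xs. (\<forall>a\<le>t. \<exists>b. Q (xs!k) (xs!k') a b) \<longrightarrow> R (xs!k) (xs!k')"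
    and pc: "pathcond Q xs i m t"
  shows "R (xs!m) (xs!i)"
proof -
  obtain p where p: "p \<noteq> []" "p!0 = m" "p!(length p - 1) = i" "\<forall>j<length p. p!j < length xs"
      "\<forall>j<length p - 1. \<forall>a\<le>t. \<exists>b. Q (xs!(p!j)) (xs!(p!Suc j)) a b"
    using pc unfolding pathcond_def by blast
  have "\<forall>l<length p. R (xs!(p!0)) (xs!(p!l))"
  proof (intro allI impI)
    fix l assume "l < length p"
    then show "R (xs!(p!0)) (xs!(p!l))"
    proof (induction l)
      case 0 then show ?case using eq by (simp add: equivp_reflp)
    next
      case (Suc l)
      then have "R (xs!(p!l)) (xs!(p!Suc l))" using t p(4,5) by auto
      then show ?case using Suc eq by (meson Suc_lessD equivp_transp)
    qed
  qed
  then show ?thesis using p(1,2,3) by (metis diff_less length_greater_0_conv zero_less_one)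
qed

lemma fin_bound:
  fixes P :: "'a \<Rightarrow> nat \<Rightarrow> bool"
  assumes "finite S" "\<forall>u\<in>S. \<exists>b. P u b"
  shows "\<exists>B. \<forall>u\<in>S. \<exists>b\<le>B. P u b"
  using assms
proof (induction S rule: finite_induct)
  case empty then show ?case by simp
next
  case (insert x S)
  then obtain B where B: "\<forall>u\<in>S. \<exists>b\<le>B. P u b" by auto
  obtain b where "P x b" using insert by auto
  then have "\<forall>u\<in>insert x S. \<exists>b'\<le>max B b. P u b'"
  proof (intro ballI)
    fix u assume "P x b" "u \<in> insert x S"
    from \<open>u \<in> insert x S\<close> show "\<exists>b'\<le>max B b. P u b'"
    proof (rule insertE)
      assume "u = x" then show ?thesis using \<open>P x b\<close> by (intro exI[of _ b]) auto
    next
      assume "u \<in> S" then obtain b' where "b' \<le> B" "P u b'" using B by blast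
      then show ?thesis by (intro exI[of _ b']) auto
    qed
  qed
  then show ?case by blast
qed

lemma main_math:
  assumes eq: "equivp R" and RQ: "\<And>u v. R u v \<longleftrightarrow> (\<forall>a. \<exists>b. Q u v a b)"
    and ij: "i < length xs" "j < length xs"
  shows "(\<forall>m t. pathcond Q xs i m t \<longleftrightarrow> pathcond Q xs j m t) \<longleftrightarrow> R (xs!i) (xs!j)"
proof
  assume R: "R (xs!i) (xs!j)"
  then have R': "R (xs!j) (xs!i)" using eq by (meson equivp_symp)
  have q1: "\<forall>a\<le>t. \<exists>b. Q (xs!i) (xs!j) a b" for t using R RQ by blast
  have q2: "\<forall>a\<le>t. \<exists>b. Q (xs!j) (xs!i) a b" for t using R' RQ by blast
  show "\<forall>m t. pathcond Q xs i m t \<longleftrightarrow> pathcond Q xs j m t"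
  proof (intro allI iffI)
    fix m t assume "pathcond Q xs i m t" then show "pathcond Q xs j m t" using path_append ij q1 by blast
  next
    fix m t assume "pathcond Q xs j m t" then show "pathcond Q xs i m t" using path_append ij q2 by blast
  qed
next
  assume a: "\<forall>m t. pathcond Q xs i m t \<longleftrightarrow> pathcond Q xs j m t"
  show "R (xs!i) (xs!j)"
  proof (rule ccontr)
    assume nR: "\<not> R (xs!i) (xs!j)"
    let ?S = "{(k, k'). k < length xs \<and> k' < length xs \<and> \<not> R (xs!k) (xs!k')}"
    have "\<forall>u\<in>?S. \<exists>a. \<not> (\<exists>b. Q (xs!fst u) (xs!snd u) a b)" using RQ by auto
    then obtain h where h: "\<forall>u\<in>?S. \<not> (\<exists>b. Q (xs!fst u) (xs!snd u) (h u) b)" by (rule bchoice[THEN exE])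
    have finS: "finite ?S" by (rule finite_subset[of _ "{..<length xs} \<times> {..<length xs}"]) auto
    define t where "t = Max (h ` ?S \<union> {0})"
    have ht: "u \<in> ?S \<Longrightarrow> h u \<le> t" for u unfolding t_def using finS by (intro Max_ge) auto
    have tR: "\<forall>k<length xs. \<forall>k'<length xs. (\<forall>a\<le>t. \<exists>b. Q (xs!k) (xs!k') a b) \<longrightarrow> R (xs!k) (xs!k')"
    proof (intro allI impI)
      fix k k' assume k: "k < length xs" "k' < length xs" and all: "\<forall>a\<le>t. \<exists>b. Q (xs!k) (xs!k') a b"
      show "R (xs!k) (xs!k')"
      proof (rule ccontr)
        assume "\<not> R (xs!k) (xs!k')"
        then have "(k, k') \<in> ?S" using k by auto
        then have "\<not> (\<exists>b. Q (xs!k) (xs!k') (h (k, k')) b)" "h (k, k') \<le> t" using h ht by auto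
        then show False using all by blast
      qed
    qed
    have "pathcond Q xs i i t" unfolding pathcond_def using ij by (intro exI[of _ "[i]"]) auto
    then have "pathcond Q xs j i t" using a by blast
    then have "R (xs!i) (xs!j)" by (rule path_R[OF eq tR])
    then show False using nR by blast
  qed
qed



definition validw :: "(nat \<Rightarrow> nat \<Rightarrow> nat \<Rightarrow> nat \<Rightarrow> bool) \<Rightarrow> nat \<Rightarrow> nat \<Rightarrow> nat \<Rightarrow> bool" where
  "validw Q w x c \<longleftrightarrow>
    0 < length (list_decode (fst (prod_decode w))) \<and>
    nthd (fst (prod_decode w)) 0 = fst (prod_decode x) \<and>
    nthd (fst (prod_decode w)) (length (list_decode (fst (prod_decode w))) - 1) = snd (prod_decode c) \<and>
    (\<forall>j<length (list_decode (fst (prod_decode w))).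
        nthd (fst (prod_decode w)) j < length (list_decode (fst (prod_decode c)))) \<and>
    (\<forall>j<length (list_decode (fst (prod_decode w))) - 1. \<forall>a<Suc (snd (prod_decode x)).
        \<exists>b<Suc (snd (prod_decode w)).
          Q (nthd (fst (prod_decode c)) (nthd (fst (prod_decode w)) j))
            (nthd (fst (prod_decode c)) (nthd (fst (prod_decode w)) (Suc j))) a b)"

lemma rc_hd: "0 < k \<Longrightarrow> rcomp X k (\<lambda>ys. hd ys)"
  by (rule rcomp_cong[OF rcomp_proj[of 0 k]]) (auto simp: hd_conv_nth)
lemma rc_tl_nth: "Suc i < k \<Longrightarrow> rcomp X k (\<lambda>ys. tl ys ! i)"
  by (rule rcomp_cong[OF rcomp_proj[of "Suc i" k]]) (auto simp: nth_tl)
lemma rc_hd_tl: "Suc 0 < k \<Longrightarrow> rcomp X k (\<lambda>ys. hd (tl ys))"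
  apply (rule rcomp_cong[OF rcomp_proj[of "Suc 0" k]], simp)
  subgoal for xs by (cases xs; cases "tl xs"; auto)
  done
lemma rc_hd_tl2: "Suc (Suc 0) < k \<Longrightarrow> rcomp X k (\<lambda>ys. hd (tl (tl ys)))"
  apply (rule rcomp_cong[OF rcomp_proj[of "Suc (Suc 0)" k]], simp)
  subgoal for xs by (cases xs; cases "tl xs"; cases "tl (tl xs)"; auto)
  done
lemma rc_tl3_nth: "Suc (Suc (Suc i)) < k \<Longrightarrow> rcomp X k (\<lambda>ys. tl (tl (tl ys)) ! i)"
  by (rule rcomp_cong[OF rcomp_proj[of "Suc (Suc (Suc i))" k]]) (auto simp: nth_tl)
lemma rc_tl2_nth: "Suc (Suc i) < k \<Longrightarrow> rcomp X k (\<lambda>ys. tl (tl ys) ! i)"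
  by (rule rcomp_cong[OF rcomp_proj[of "Suc (Suc i)" k]]) (auto simp: nth_tl)

lemma rc_validw:
  assumes Qc: "rcomp X 4 (\<lambda>xs. b2n (Q (xs!0) (xs!1) (xs!2) (xs!3)))"
  shows "rcomp X 3 (\<lambda>xs. b2n (validw Q (xs!0) (xs!1) (xs!2)))"
proof -
  have rc_Q: "rcomp X k (\<lambda>xs. b2n (Q (f1 xs) (f2 xs) (f3 xs) (f4 xs)))"
    if "rcomp X k f1" "rcomp X k f2" "rcomp X k f3" "rcomp X k f4" for k f1 f2 f3 f4
    using rcomp_app4[OF Qc that] by simp
  show ?thesis unfolding validw_def
    by (intro rc_conj rc_eq rc_less rc_ball rc_bex rc_nthd rc_len rc_fst rc_snd rc_sub rc_add rc_suc
        rcomp_const rc_Q rcomp_proj rc_hd rc_tl_nth rc_hd_tl rc_tl2_nth rc_hd_tl2 rc_tl3_nth; simp)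
qed



lemma nthd_enc: "k < length xs \<Longrightarrow> nthd (list_encode xs) k = xs ! k"
  by (simp add: nthd_def)

lemma validw_iff:
  "(\<exists>w. validw Q w x (prod_encode (list_encode xs, i))) \<longleftrightarrow> pathcond Q xs i (fst (prod_decode x)) (snd (prod_decode x))"
  (is "?L \<longleftrightarrow> ?R")
proof
  assume ?L
  then obtain w where v: "validw Q w x (prod_encode (list_encode xs, i))" by blast
  define p where "p = list_decode (fst (prod_decode w))"
  have np: "nthd (fst (prod_decode w)) j = p ! j" if "j < length p" for j
    using that unfolding p_def nthd_def by simp
  have v': "0 < length p" "nthd (fst (prod_decode w)) 0 = fst (prod_decode x)"
    "nthd (fst (prod_decode w)) (length p - 1) = i"
    "\<forall>j<length p. nthd (fst (prod_decode w)) j < length xs"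
    "\<forall>j<length p - 1. \<forall>a<Suc (snd (prod_decode x)). \<exists>b<Suc (snd (prod_decode w)).
          Q (nthd (list_encode xs) (nthd (fst (prod_decode w)) j))
            (nthd (list_encode xs) (nthd (fst (prod_decode w)) (Suc j))) a b"
    using v unfolding validw_def p_def by auto
  have lt: "\<forall>j<length p. p!j < length xs" using v'(4) np by auto
  show ?R unfolding pathcond_def
  proof (intro exI[of _ p] conjI)
    show "p \<noteq> []" using v'(1) by auto
    show "p!0 = fst (prod_decode x)" using v'(1,2) np by auto
    show "p!(length p - 1) = i" using v'(1,3) np by auto
    show "\<forall>j<length p. p!j < length xs" by (rule lt)
    show "\<forall>j<length p - 1. \<forall>a\<le>snd (prod_decode x). \<exists>b. Q (xs!(p!j)) (xs!(p!Suc j)) a b"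
    proof (intro allI impI)
      fix j a assume j: "j < length p - 1" and a: "a \<le> snd (prod_decode x)"
      then have "j < length p" "Suc j < length p" by auto
      then show "\<exists>b. Q (xs!(p!j)) (xs!(p!Suc j)) a b"
        using v'(5) j a np lt nthd_enc by (metis less_Suc_eq_le)
    qed
  qed
next
  assume ?R
  then obtain p where p: "p \<noteq> []" "p!0 = fst (prod_decode x)" "p!(length p - 1) = i" "\<forall>j<length p. p!j < length xs"
      "\<forall>j<length p - 1. \<forall>a\<le>snd (prod_decode x). \<exists>b. Q (xs!(p!j)) (xs!(p!Suc j)) a b"
    unfolding pathcond_def by blast
  let ?S = "{(j, a). j < length p - 1 \<and> a \<le> snd (prod_decode x)}"
  have "finite ?S" by (rule finite_subset[of _ "{..<length p - 1} \<times> {..snd (prod_decode x)}"]) auto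
  moreover have "\<forall>u\<in>?S. \<exists>b. Q (xs!(p!fst u)) (xs!(p!Suc (fst u))) (snd u) b" using p(5) by auto
  ultimately obtain B where B: "\<forall>u\<in>?S. \<exists>b\<le>B. Q (xs!(p!fst u)) (xs!(p!Suc (fst u))) (snd u) b"
    using fin_bound[of ?S "\<lambda>u b. Q (xs!(p!fst u)) (xs!(p!Suc (fst u))) (snd u) b"] by blast
  have "validw Q (prod_encode (list_encode p, B)) x (prod_encode (list_encode xs, i))"
    unfolding validw_def
  proof (simp only: prod_encode_inverse fst_conv snd_conv list_encode_inverse, intro conjI allI impI)
    show "0 < length p" using p(1) by auto
    show "nthd (list_encode p) 0 = fst (prod_decode x)" using p(1,2) by (simp add: nthd_enc)
    show "nthd (list_encode p) (length p - 1) = i" using p(1,3) by (simp add: nthd_enc)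
    fix j assume j: "j < length p"
    then show "nthd (list_encode p) j < length xs" using p(4) by (simp add: nthd_enc)
  next
    fix j a assume j: "j < length p - 1" and a: "a < Suc (snd (prod_decode x))"
    then have "(j, a) \<in> ?S" by auto
    then obtain b where "b \<le> B" "Q (xs!(p!j)) (xs!(p!Suc j)) a b" using B by fastforce
    moreover have "nthd (list_encode p) j = p!j" "nthd (list_encode p) (Suc j) = p!Suc j" using j by (auto simp: nthd_enc)
    moreover have "nthd (list_encode xs) (p!j) = xs!(p!j)" "nthd (list_encode xs) (p!Suc j) = xs!(p!Suc j)"
      using j p(4) by (auto simp: nthd_enc)
    ultimately show "\<exists>b<Suc B. Q (nthd (list_encode xs) (nthd (list_encode p) j))
        (nthd (list_encode xs) (nthd (list_encode p) (Suc j))) a b"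
      by (simp only:) (meson le_imp_less_Suc)
  qed
  then show ?L by blast
qed



lemma PR_encK: "PR (\<lambda>ys. enc Zero) (\<lambda>ys. prod_encode (3, Suc (prod_encode (prod_encode (1, 0), Suc (prod_encode (ys!1, 0)))))) n [] = enc (K n)"
  by (induction n) auto

lemma rc_encK1: "rcomp X 1 (\<lambda>xs. enc (K (xs!0)))"
proof -
  have "rcomp X (Suc (Suc 0)) (\<lambda>ys. prod_encode (3, Suc (prod_encode (prod_encode (1, 0), Suc (prod_encode (ys!1, 0))))))"
    by (intro rc_pe rc_suc rcomp_const rcomp_proj) auto
  then have "rcomp X (Suc 0) (\<lambda>xs. PR (\<lambda>ys. enc Zero) (\<lambda>ys. prod_encode (3, Suc (prod_encode (prod_encode (1, 0), Suc (prod_encode (ys!1, 0)))))) (hd xs) (tl xs))"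
    by (intro rcomp_prec rcomp_const)
  then show ?thesis by (rule rcomp_cong2) (auto simp: length_Suc_conv PR_encK[simplified])
qed

lemma rc_encK: "rcomp X k f \<Longrightarrow> rcomp X k (\<lambda>xs. enc (K (f xs)))"
  using rcomp_app1[OF rc_encK1] by simp

definition hz :: "recf \<Rightarrow> nat \<Rightarrow> nat \<Rightarrow> nat" where
  "hz U z i = enc (Comp U [Proj 0, K (prod_encode (z, i))])"

lemma rc_hz: "rcomp X k f \<Longrightarrow> rcomp X k g \<Longrightarrow> rcomp X k (\<lambda>xs. hz U (f xs) (g xs))"
  unfolding hz_def by (simp, intro rc_pe rc_suc rcomp_const rc_encK)

fun NB :: "recf \<Rightarrow> nat \<Rightarrow> nat \<Rightarrow> nat" where
  "NB U z 0 = 0"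
| "NB U z (Suc r) = Suc (prod_encode (hz U z (length (list_decode z) - Suc r), NB U z r))"

lemma NB_eq: "r \<le> length (list_decode z) \<Longrightarrow>
   NB U z r = list_encode (map (hz U z) [length (list_decode z) - r..<length (list_decode z)])"
proof (induction r)
  case 0 then show ?case by simp
next
  case (Suc r)
  let ?n = "length (list_decode z)"
  have "[?n - Suc r..<?n] = (?n - Suc r) # [?n - r..<?n]"
    using Suc.prems by (simp add: upt_conv_Cons Suc_diff_Suc)
  then show ?case using Suc by simp
qed

lemma PR_NB: "PR (\<lambda>ys. 0) (\<lambda>ys. Suc (prod_encode (hz U (ys!2) (length (list_decode (ys!2)) - Suc (ys!0)), ys!1))) r [z] = NB U z r"
  by (induction r) auto

lemma rc_outer: "rcomp X 1 (\<lambda>ys. list_encode (map (hz U (ys!0)) [0..<length (list_decode (ys!0))]))"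
proof -
  have "rcomp X (Suc (Suc 1)) (\<lambda>ys. Suc (prod_encode (hz U (ys!2) (length (list_decode (ys!2)) - Suc (ys!0)), ys!1)))"
    by (intro rc_suc rc_pe rc_hz rc_sub rc_len rcomp_proj) auto
  then have "rcomp X (Suc 1) (\<lambda>xs. PR (\<lambda>ys. 0) (\<lambda>ys. Suc (prod_encode (hz U (ys!2) (length (list_decode (ys!2)) - Suc (ys!0)), ys!1))) (hd xs) (tl xs))"
    by (intro rcomp_prec rcomp_const)
  then have "rcomp X 2 (\<lambda>xs. PR (\<lambda>ys. 0) (\<lambda>ys. Suc (prod_encode (hz U (ys!2) (length (list_decode (ys!2)) - Suc (ys!0)), ys!1))) (hd xs) (tl xs))"
    by (simp add: numeral_2_eq_2)
  then have "rcomp X 1 (\<lambda>xs. (\<lambda>xs. PR (\<lambda>ys. 0) (\<lambda>ys. Suc (prod_encode (hz U (ys!2) (length (list_decode (ys!2)) - Suc (ys!0)), ys!1))) (hd xs) (tl xs)) [length (list_decode (xs!0)), xs!0])"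
    by (intro rcomp_app2 rc_len rcomp_proj) auto
  then show ?thesis by (simp add: PR_NB[simplified] NB_eq)
qed

lemma W_P:
  assumes pV: "\<forall>ys. length ys = 3 \<longrightarrow> eval X pV ys (1 - b2n (validw Q (ys!0) (ys!1) (ys!2)))"
  shows "W (enc (Comp (Minim pV) [Proj 0, K c])) X = {x. \<exists>w. validw Q w x c}"
proof -
  have mh: "(\<exists>y. eval X (Minim pV) [x, c] y) \<longleftrightarrow> (\<exists>w. validw Q w x c)" for x
  proof -
    have "(\<exists>y. eval X (Minim pV) [x, c] y) \<longleftrightarrow> (\<exists>m. (\<lambda>ys. 1 - b2n (validw Q (ys!0) (ys!1) (ys!2))) (m # [x, c]) = 0)"
      by (rule minim_halts[where k = 2]) (use pV in \<open>auto simp: numeral_3_eq_3\<close>)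
    then show ?thesis by (simp add: b2n_def)
  qed
  have "(\<exists>y. eval X (Comp (Minim pV) [Proj 0, K c]) [x] y) \<longleftrightarrow> (\<exists>y. eval X (Minim pV) [x, c] y)" for x
  proof
    assume "\<exists>y. eval X (Comp (Minim pV) [Proj 0, K c]) [x] y"
    then obtain y ys where a: "list_all2 (\<lambda>g y. eval X g [x] y) [Proj 0, K c] ys" "eval X (Minim pV) ys y"
      by (auto elim: eval.cases)
    then obtain y1 y2 where ys: "ys = [y1, y2]" "eval X (Proj 0) [x] y1" "eval X (K c) [x] y2"
      by (auto simp: list_all2_Cons1)
    have "y1 = x" using eval_det[OF ys(2) eval_Proj[of 0 "[x]"]] by simp
    moreover have "y2 = c" using eval_det[OF ys(3) eval_K] .
    ultimately show "\<exists>y. eval X (Minim pV) [x, c] y" using a ys by auto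
  next
    assume "\<exists>y. eval X (Minim pV) [x, c] y"
    then obtain y where "eval X (Minim pV) [x, c] y" by blast
    moreover have "list_all2 (\<lambda>g y. eval X g [x] y) [Proj 0, K c] [x, c]"
      using eval_Proj[of 0 "[x]" X] eval_K[of X c "[x]"] by auto
    ultimately show "\<exists>y. eval X (Comp (Minim pV) [Proj 0, K c]) [x] y" by (blast intro: eval_Comp)
  qed
  then show ?thesis unfolding W_def using mh enc_inj by blast
qed



theorem corollary3p5:
  fixes X :: "nat set" and R :: "nat \<Rightarrow> nat \<Rightarrow> bool"
  assumes "equivp R" and "Pi2_rel X R"
  shows "finitary_reducible R (\<lambda>i j. W i X = W j X)"
proof -
  obtain Q q where hq: "\<forall>i j a b. eval X q [i, j, a, b] (if Q i j a b then 1 else 0)"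
    and RQ: "\<forall>i j. R i j \<longleftrightarrow> (\<forall>a. \<exists>b. Q i j a b)"
    using assms(2) unfolding Pi2_rel_def by blast
  have Qc: "rcomp X 4 (\<lambda>xs. b2n (Q (xs!0) (xs!1) (xs!2) (xs!3)))"
    unfolding rcomp_def
  proof (intro exI[of _ q] allI impI)
    fix xs :: "nat list" assume "length xs = 4"
    then obtain a b c d where "xs = [a, b, c, d]" by (auto simp: eval_nat_numeral length_Suc_conv)
    then show "eval X q xs (b2n (Q (xs!0) (xs!1) (xs!2) (xs!3)))" using hq by (simp add: b2n_def)
  qed
  have "rcomp X 3 (\<lambda>xs. 1 - b2n (validw Q (xs!0) (xs!1) (xs!2)))"
    by (intro rc_sub rcomp_const rc_validw Qc)
  then obtain pV where pV: "\<forall>ys. length ys = 3 \<longrightarrow> eval X pV ys (1 - b2n (validw Q (ys!0) (ys!1) (ys!2)))"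
    unfolding rcomp_def by blast
  define U where "U = Minim pV"
  define g where "g xs = map (hz U (list_encode xs)) [0..<length xs]" for xs
  obtain p where p: "\<forall>ys. length ys = 1 \<longrightarrow> eval {} p ys (list_encode (map (hz U (ys!0)) [0..<length (list_decode (ys!0))]))"
    using rc_outer[of "{}" U] unfolding rcomp_def by blast
  have Wg: "W (g xs ! i) X = {x. \<exists>w. validw Q w x (prod_encode (list_encode xs, i))}" if "i < length xs" for xs i
    using that W_P[OF pV] by (simp add: g_def hz_def U_def)
  show ?thesis unfolding finitary_reducible_def
  proof (intro exI[of _ g] exI[of _ p] conjI allI impI)
    fix xs :: "nat list" assume "xs \<noteq> []"
    show "eval {} p [list_encode xs] (list_encode (g xs))"
      using p[rule_format, of "[list_encode xs]"] by (simp add: g_def)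
  next
    fix xs :: "nat list" assume "xs \<noteq> []"
    show "length (g xs) = length xs" by (simp add: g_def)
  next
    fix xs :: "nat list" and i j assume ne: "xs \<noteq> []" and ij: "i < j \<and> j < length xs"
    then have il: "i < length xs" and jl: "j < length xs" by auto
    have "(W (g xs ! i) X = W (g xs ! j) X) \<longleftrightarrow>
       (\<forall>x. pathcond Q xs i (fst (prod_decode x)) (snd (prod_decode x)) \<longleftrightarrow> pathcond Q xs j (fst (prod_decode x)) (snd (prod_decode x)))"
      unfolding Wg[OF il] Wg[OF jl] validw_iff by blast
    also have "\<dots> \<longleftrightarrow> (\<forall>m t. pathcond Q xs i m t \<longleftrightarrow> pathcond Q xs j m t)"
      by (metis prod_encode_inverse fst_conv snd_conv)
    also have "\<dots> \<longleftrightarrow> R (xs!i) (xs!j)"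
      by (rule main_math[OF assms(1) _ il jl]) (use RQ in blast)
    finally show "R (xs ! i) (xs ! j) \<longleftrightarrow> W (g xs ! i) X = W (g xs ! j) X" by simp
  qed
qed

end
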